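(* Let $r\ge 2$ and $m$ be integers with $0\le 2m\le r$, $n=2r-4m$, and let $f:S^2(S^r(\mathbb{C}^2))\to S^{n}(\mathbb{C}^2)$ be an $\mathfrak{sl}_2(\mathbb{C})$-equivariant linear map, written $f=\sum_{k=0}^n q_k w_k$. Let $\lambda=q_0(x_0x_{2m})$. Then for every $0\le k\le n/2$, every $0\le i\le r$, and $j=2m+k-i$, $$\binom{n}{k}q_k(x_ix_j)=\lambda\sum_{s=\max(0,i-k)}^{\min(2m,i)}(-1)^s\binom{2m}{s}\binom{r-s}{r-i}\binom{r-2m+s}{r-j},$$ where binomial coefficients $\binom{a}{b}$ that do not make sense (e.g. $b<0$, $a<0$ or $b>a$) are taken to be $0$, and $x_l=0$ for $l\notin[0,r]$.
   Context: $\mathfrak{sl}_2(\mathbb{C})$ has basis $X=\begin{pmatrix}0&1\\0&0\end{pmatrix}$, $H=\begin{pmatrix}1&0\\0&-1\end{pmatrix}$, $Y=\begin{pmatrix}0&0\\1&0\end{pmatrix}$, acting on the irreducible modules $S^d(\mathbb{C}^2)$. Let $x_0\in S^r(\mathbb{C}^2)$ be a highest weight vector and $x_i=Y^ix_0/i!$ ($0\le i\le r$), so $Yx_i=(i+1)x_{i+1}$, $Xx_i=(r-i+1)x_{i-1}$, $Hx_i=(r-2i)x_i$. Let $w_0\in S^n(\mathbb{C}^2)$ be a highest weight vector and $w_k=Y^kw_0/k!$ ($0\le k\le n$). Writing $f=\sum_{k=0}^n q_kw_k$ means $f(u)=\sum_k q_k(u)w_k$ for linear forms $q_k$ on $S^2(S^r(\mathbb{C}^2))$;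 $q_k(x_ix_j)$ is the value on the product $x_ix_j$. *)

theory Defs
  imports Complex_Main
begin

datatype sl2gen = GX | GH | GY

definition binz :: "int \<Rightarrow> int \<Rightarrow> complex" where
  "binz a b = (if 0 \<le> b \<and> b \<le> a then of_nat (nat a choose nat b) else 0)"

text \<open>S^2(S^r(C^2)): an element is written uniquely as sum over ALL ordered pairs (a,b)
  of c a b * x_a x_b with c symmetric and supported on [0,r]^2.\<close>
definition S2 :: "int \<Rightarrow> (int \<Rightarrow> int \<Rightarrow> complex) set" where
  "S2 r = {c. (\<forall>a b. c a b = c b a) \<and>
              (\<forall>a b. \<not> (0 \<le> a \<and> a \<le> r \<and> 0 \<le> b \<and> b \<le> r) \<longrightarrow> c a b = 0)}"

text \<open>Action induced by X x_i = (r-i+1) x_(i-1), H x_i = (r-2i) x_i, Y x_i = (i+1) x_(i+1),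
  acting on products by the Leibniz rule (x_l = 0 for l outside [0,r]).\<close>
definition S2_act :: "int \<Rightarrow> sl2gen \<Rightarrow> (int \<Rightarrow> int \<Rightarrow> complex) \<Rightarrow> (int \<Rightarrow> int \<Rightarrow> complex)" where
  "S2_act r Z c = (\<lambda>a b. if 0 \<le> a \<and> a \<le> r \<and> 0 \<le> b \<and> b \<le> r then
     (case Z of
        GX \<Rightarrow> of_int (r - a) * c (a + 1) b + of_int (r - b) * c a (b + 1)
      | GH \<Rightarrow> of_int (2 * r - 2 * a - 2 * b) * c a b
      | GY \<Rightarrow> of_int a * c (a - 1) b + of_int b * c a (b - 1))
     else 0)"

definition Sn :: "int \<Rightarrow> (int \<Rightarrow> complex) set" where
  "Sn n = {v. \<forall>k. \<not> (0 \<le> k \<and> k \<le> n) \<longrightarrow> v k = 0}"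

text \<open>X w_k = (n-k+1) w_(k-1), H w_k = (n-2k) w_k, Y w_k = (k+1) w_(k+1).\<close>
definition Sn_act :: "int \<Rightarrow> sl2gen \<Rightarrow> (int \<Rightarrow> complex) \<Rightarrow> (int \<Rightarrow> complex)" where
  "Sn_act n Z v = (\<lambda>k. if 0 \<le> k \<and> k \<le> n then
     (case Z of
        GX \<Rightarrow> of_int (n - k) * v (k + 1)
      | GH \<Rightarrow> of_int (n - 2 * k) * v k
      | GY \<Rightarrow> of_int k * v (k - 1))
     else 0)"

definition mono :: "int \<Rightarrow> int \<Rightarrow> int \<Rightarrow> (int \<Rightarrow> int \<Rightarrow> complex)" where
  "mono r i j = (\<lambda>a b. if 0 \<le> i \<and> i \<le> r \<and> 0 \<le> j \<and> j \<le> r then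
      (if a = i \<and> b = j then 1/2 else 0) + (if a = j \<and> b = i then 1/2 else 0) else 0)"

definition sl2_equivariant_linear ::
  "int \<Rightarrow> int \<Rightarrow> ((int \<Rightarrow> int \<Rightarrow> complex) \<Rightarrow> (int \<Rightarrow> complex)) \<Rightarrow> bool" where
  "sl2_equivariant_linear r n f \<longleftrightarrow>
     (\<forall>c\<in>S2 r. f c \<in> Sn n) \<and>
     (\<forall>c\<in>S2 r. \<forall>d\<in>S2 r. f (\<lambda>a b. c a b + d a b) = (\<lambda>k. f c k + f d k)) \<and>
     (\<forall>t. \<forall>c\<in>S2 r. f (\<lambda>a b. t * c a b) = (\<lambda>k. t * f c k)) \<and>
     (\<forall>Z. \<forall>c\<in>S2 r. f (S2_act r Z c) = Sn_act n Z (f c))"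

text \<open>Writing f = sum_k q_k w_k, this is q_k(x_i x_j).\<close>
definition qk :: "int \<Rightarrow> ((int \<Rightarrow> int \<Rightarrow> complex) \<Rightarrow> (int \<Rightarrow> complex)) \<Rightarrow> int \<Rightarrow> int \<Rightarrow> int \<Rightarrow> complex" where
  "qk r f k i j = f (mono r i j) k"

end

theory Submission
  imports Defs
begin

lemma nat_binom_step: "Suc b * (a choose Suc b) = (a - b) * (a choose b)"
  by (metis binomial_absorption binomial_absorb_comp)

lemma binz_step:
  assumes "0 \<le> a"
  shows "of_int (b+1) * binz a (b+1) = of_int (a-b) * binz a b"
proof (cases "0 \<le> b \<and> b + 1 \<le> a")
  case True
  have e: "nat (b+1) = Suc (nat b)" using True by (simp add: Suc_nat_eq_nat_zadd1)
  have "Suc (nat b) * (nat a choose Suc (nat b)) = (nat a - nat b) * (nat a choose nat b)"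
    by (rule nat_binom_step)
  hence "of_nat (Suc (nat b) * (nat a choose Suc (nat b))) =
         (of_nat ((nat a - nat b) * (nat a choose nat b)) :: complex)" by simp
  moreover have "of_nat (nat a - nat b) = (of_int (a - b) :: complex)"
    using True by (simp add: nat_diff_distrib[symmetric] of_nat_nat)
  moreover have "(of_nat (Suc (nat b)) :: complex) = of_int (b+1)" using True by simp
  ultimately show ?thesis using True unfolding binz_def e
    by (simp only: of_nat_mult) simp
next
  case False
  then consider "b < -1" | "b = -1" | "b = a" | "b > a"
    using assms by linarith
  then show ?thesis
    by cases (auto simp: binz_def)
qed

definition G :: "int \<Rightarrow> int \<Rightarrow> int \<Rightarrow> int \<Rightarrow> complex" where
  "G m r i j = (\<Sum>s = 0 .. 2*m.
      (-1) ^ nat s * binz (2 * m) s * binz (r - s) (r - i) * binz (r - 2 * m + s) (r - j))"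

lemma G_rec:
  assumes "0 \<le> 2*m" "2*m \<le> r"
  shows "of_int (r-i+1) * G m r (i-1) j + of_int (r-j+1) * G m r i (j-1)
         = of_int (i+j-2*m) * G m r i j"
  unfolding G_def sum_distrib_left sum.distrib[symmetric]
proof (rule sum.cong[OF refl])
  fix s assume s: "s \<in> {0..2*m}"
  define c where "c = (-1) ^ nat s * binz (2 * m) s"
  define A where "A = binz (r - s) (r - i)"
  define A' where "A' = binz (r - s) (r - (i - 1))"
  define B where "B = binz (r - 2*m + s) (r - j)"
  define B' where "B' = binz (r - 2*m + s) (r - (j - 1))"
  have e1: "of_int (r-i+1) * A' = of_int (i-s) * A"
    using binz_step[of "r-s" "r-i"] s assms unfolding A_def A'_def
    by (simp add: algebra_simps)
  have e2: "of_int (r-j+1) * B' = of_int (j-2*m+s) * B"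
    using binz_step[of "r-2*m+s" "r-j"] s assms unfolding B_def B'_def
    by (simp add: algebra_simps)
  have "of_int (r-i+1) * (c * A' * B) + of_int (r-j+1) * (c * A * B')
        = c * B * (of_int (r-i+1) * A') + c * A * (of_int (r-j+1) * B')"
    by (simp add: algebra_simps)
  also have "\<dots> = c * B * (of_int (i-s) * A) + c * A * (of_int (j-2*m+s) * B)"
    using e1 e2 by simp
  also have "\<dots> = of_int (i+j-2*m) * (c * A * B)"
    by (simp add: algebra_simps)
  finally show "of_int (r-i+1) * ((-1) ^ nat s * binz (2 * m) s * binz (r - s) (r - (i - 1)) *
          binz (r - 2 * m + s) (r - j)) +
         of_int (r-j+1) * ((-1) ^ nat s * binz (2 * m) s * binz (r - s) (r - i) *
          binz (r - 2 * m + s) (r - (j - 1))) =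
         of_int (i+j-2*m) * ((-1) ^ nat s * binz (2 * m) s * binz (r - s) (r - i) *
          binz (r - 2 * m + s) (r - j))"
    unfolding c_def A_def A'_def B_def B'_def .
qed

lemma mono_sup: assumes "\<not> (0 \<le> a \<and> a \<le> r \<and> 0 \<le> b \<and> b \<le> r)" shows "mono r i j a b = 0"
proof (cases "0 \<le> i \<and> i \<le> r \<and> 0 \<le> j \<and> j \<le> r")
  case True
  have "\<not> (a = i \<and> b = j)" "\<not> (a = j \<and> b = i)" using True assms by blast+
  then show ?thesis unfolding mono_def by (simp only: if_False add_0_right if_cancel)
next
  case False
  then show ?thesis unfolding mono_def by (simp only: if_False)
qed
lemma mono_zero: "\<not> (0 \<le> i \<and> i \<le> r \<and> 0 \<le> j \<and> j \<le> r) \<Longrightarrow> mono r i j = (\<lambda>a b. 0)"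
  unfolding mono_def by (rule ext, rule ext) (simp only: if_False)
lemma mono_sym: "mono r i j a b = mono r i j b a" unfolding mono_def
  by (cases "0 \<le> i \<and> i \<le> r \<and> 0 \<le> j \<and> j \<le> r") (simp_all only: if_True if_False, simp add: ac_simps)

lemma mono_S2: "mono r i j \<in> S2 r"
  unfolding S2_def mem_Collect_eq using mono_sym mono_sup by blast

definition h :: "int \<Rightarrow> int \<Rightarrow> int \<Rightarrow> int \<Rightarrow> int \<Rightarrow> complex" where
 "h r i j a b = (if 0 \<le> i \<and> i \<le> r \<and> 0 \<le> j \<and> j \<le> r \<and> a = i \<and> b = j then 1/2 else 0)"
lemma hY: "0 \<le> a \<Longrightarrow> a \<le> r \<Longrightarrow> 0 \<le> b \<Longrightarrow> b \<le> r \<Longrightarrow>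
  of_int a * h r i j (a-1) b + of_int b * h r i j a (b-1) =
  of_int (i+1) * h r (i+1) j a b + of_int (j+1) * h r i (j+1) a b"
  unfolding h_def
  apply (cases "a = i+1 \<and> b = j"; cases "a = i \<and> b = j + 1")
  apply auto
   apply (subgoal_tac "i = -1", simp, linarith)
  apply (subgoal_tac "j = -1", simp, linarith)
  done
lemma hX: "0 \<le> a \<Longrightarrow> a \<le> r \<Longrightarrow> 0 \<le> b \<Longrightarrow> b \<le> r \<Longrightarrow>
  of_int (r-a) * h r i j (a+1) b + of_int (r-b) * h r i j a (b+1) =
  of_int (r-i+1) * h r (i-1) j a b + of_int (r-j+1) * h r i (j-1) a b"
  unfolding h_def
  apply (cases "a = i-1 \<and> b = j"; cases "a = i \<and> b = j - 1")
  apply auto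
   apply (subgoal_tac "i = r+1", simp, linarith)
  apply (subgoal_tac "j = r+1", simp, linarith)
  done
lemma mono_h: "mono r i j a b = h r i j a b + h r j i a b"
  unfolding mono_def h_def by auto
lemma h_out: "\<not> (0 \<le> a \<and> a \<le> r) \<Longrightarrow> h r i j a b = 0"  "\<not> (0 \<le> b \<and> b \<le> r) \<Longrightarrow> h r i j a b = 0"
  unfolding h_def by auto
lemma Y_mono: "S2_act r GY (mono r i j) =
   (\<lambda>a b. of_int (i+1) * mono r (i+1) j a b + of_int (j+1) * mono r i (j+1) a b)"
  unfolding fun_eq_iff
proof (intro allI)
  fix a b
  show "S2_act r GY (mono r i j) a b = of_int (i+1) * mono r (i+1) j a b + of_int (j+1) * mono r i (j+1) a b"
  proof (cases "0 \<le> a \<and> a \<le> r \<and> 0 \<le> b \<and> b \<le> r")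
    case True
    then show ?thesis unfolding S2_act_def mono_h
      using hY[of a r b i j] hY[of a r b j i] by (simp add: algebra_simps)
  next
    case False
    then show ?thesis unfolding S2_act_def mono_h using h_out by auto
  qed
qed
lemma X_mono: "S2_act r GX (mono r i j) =
   (\<lambda>a b. of_int (r-i+1) * mono r (i-1) j a b + of_int (r-j+1) * mono r i (j-1) a b)"
  unfolding fun_eq_iff
proof (intro allI)
  fix a b
  show "S2_act r GX (mono r i j) a b = of_int (r-i+1) * mono r (i-1) j a b + of_int (r-j+1) * mono r i (j-1) a b"
  proof (cases "0 \<le> a \<and> a \<le> r \<and> 0 \<le> b \<and> b \<le> r")
    case True
    have "S2_act r GX (mono r i j) a b =
      (of_int (r-a) * h r i j (a+1) b + of_int (r-b) * h r i j a (b+1)) +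
      (of_int (r-a) * h r j i (a+1) b + of_int (r-b) * h r j i a (b+1))"
      using True unfolding S2_act_def mono_h by (simp add: algebra_simps)
    also have "\<dots> = (of_int (r-i+1) * h r (i-1) j a b + of_int (r-j+1) * h r i (j-1) a b) +
      (of_int (r-j+1) * h r (j-1) i a b + of_int (r-i+1) * h r j (i-1) a b)"
      using True hX[of a r b i j] hX[of a r b j i] by simp
    also have "\<dots> = of_int (r-i+1) * mono r (i-1) j a b + of_int (r-j+1) * mono r i (j-1) a b"
      unfolding mono_h by (simp add: algebra_simps)
    finally show ?thesis .
  next
    case False
    then show ?thesis unfolding S2_act_def mono_h using h_out by auto
  qed
qed

theorem mainTheorem3:
  fixes r m n :: int
    and f :: "(int \<Rightarrow> int \<Rightarrow> complex) \<Rightarrow> (int \<Rightarrow> complex)"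
  assumes "r \<ge> 2" and "0 \<le> 2 * m" and "2 * m \<le> r" and "n = 2 * r - 4 * m"
    and "sl2_equivariant_linear r n f"
  shows "\<forall>k i. 0 \<le> k \<and> 2 * k \<le> n \<and> 0 \<le> i \<and> i \<le> r \<longrightarrow>
     (let j = 2 * m + k - i; lam = qk r f 0 0 (2 * m) in
      binz n k * qk r f k i j =
      lam * (\<Sum>s = max 0 (i - k) .. min (2 * m) i.
              (-1) ^ nat s * binz (2 * m) s * binz (r - s) (r - i) * binz (r - 2 * m + s) (r - j)))"
proof -
  have E1: "\<forall>c\<in>S2 r. \<forall>d\<in>S2 r. f (\<lambda>a b. c a b + d a b) = (\<lambda>k. f c k + f d k)"
    using assms(5) unfolding sl2_equivariant_linear_def by (elim conjE)
  have E2: "\<forall>t. \<forall>c\<in>S2 r. f (\<lambda>a b. t * c a b) = (\<lambda>k. t * f c k)"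
    using assms(5) unfolding sl2_equivariant_linear_def by (elim conjE)
  have E3: "\<forall>Z. \<forall>c\<in>S2 r. f (S2_act r Z c) = Sn_act n Z (f c)"
    using assms(5) unfolding sl2_equivariant_linear_def by (elim conjE)
  have add: "\<And>c d. c \<in> S2 r \<Longrightarrow> d \<in> S2 r \<Longrightarrow> f (\<lambda>a b. c a b + d a b) = (\<lambda>k. f c k + f d k)"
    using E1 by blast
  have scal: "\<And>t c. c \<in> S2 r \<Longrightarrow> f (\<lambda>a b. t * c a b) = (\<lambda>k. t * f c k)"
    using E2 by blast
  have act: "\<And>Z c. c \<in> S2 r \<Longrightarrow> f (S2_act r Z c) = Sn_act n Z (f c)"
    using E3 by blast
  have scS2: "\<And>t c. c \<in> S2 r \<Longrightarrow> (\<lambda>a b. t * c a b) \<in> S2 r"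
    by (auto simp: S2_def)
  have lin: "\<And>s t i j i' j' k. f (\<lambda>a b. s * mono r i j a b + t * mono r i' j' a b) k
      = s * f (mono r i j) k + t * f (mono r i' j') k"
  proof -
    fix s t i j i' j' k
    have "f (\<lambda>a b. s * mono r i j a b + t * mono r i' j' a b) =
      (\<lambda>k. f (\<lambda>a b. s * mono r i j a b) k + f (\<lambda>a b. t * mono r i' j' a b) k)"
      by (rule add[OF scS2[OF mono_S2] scS2[OF mono_S2]])
    also have "\<dots> = (\<lambda>k. s * f (mono r i j) k + t * f (mono r i' j') k)"
      unfolding scal[OF mono_S2] ..
    finally show "f (\<lambda>a b. s * mono r i j a b + t * mono r i' j' a b) k
      = s * f (mono r i j) k + t * f (mono r i' j') k" by (rule fun_cong)
  qed
  have f0: "f (\<lambda>a b. 0) = (\<lambda>k. 0)"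
    using scal[OF mono_S2, of 0 0 0] by simp
  define q where "q k i j = qk r f k i j" for k i j
  have qout: "\<And>k i j. \<not> (0 \<le> i \<and> i \<le> r \<and> 0 \<le> j \<and> j \<le> r) \<Longrightarrow> q k i j = 0"
  proof -
    fix k i j assume "\<not> (0 \<le> i \<and> i \<le> r \<and> 0 \<le> j \<and> j \<le> r)"
    hence "mono r i j = (\<lambda>a b. 0)" by (rule mono_zero)
    thus "q k i j = 0" by (simp add: q_def qk_def f0)
  qed
  have n0: "0 \<le> n" using assms by simp
  have Yrel: "\<And>i j. of_int (i+1) * q 0 (i+1) j + of_int (j+1) * q 0 i (j+1) = 0"
  proof -
    fix i j
    have "f (S2_act r GY (mono r i j)) 0 = Sn_act n GY (f (mono r i j)) 0"
      using act[OF mono_S2] by simp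
    also have "\<dots> = 0" unfolding Sn_act_def by simp
    finally show "of_int (i+1) * q 0 (i+1) j + of_int (j+1) * q 0 i (j+1) = 0"
      unfolding Y_mono lin q_def qk_def .
  qed
  have Xrel: "\<And>k i j. 0 \<le> k \<Longrightarrow> k \<le> n \<Longrightarrow>
      of_int (r-i+1) * q k (i-1) j + of_int (r-j+1) * q k i (j-1) = of_int (n-k) * q (k+1) i j"
  proof -
    fix k i j assume k: "0 \<le> k" "k \<le> n"
    have "f (S2_act r GX (mono r i j)) k = Sn_act n GX (f (mono r i j)) k"
      using act[OF mono_S2] by simp
    also have "\<dots> = of_int (n-k) * q (k+1) i j" unfolding Sn_act_def q_def qk_def using k by simp
    finally show "of_int (r-i+1) * q k (i-1) j + of_int (r-j+1) * q k i (j-1) = of_int (n-k) * q (k+1) i j"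
      unfolding X_mono lin q_def qk_def .
  qed
  define lam where "lam = q 0 0 (2*m)"
  have base_t: "\<And>t::nat. int t \<le> 2*m \<Longrightarrow> q 0 (int t) (2*m - int t) = (-1)^t * binz (2*m) (int t) * lam"
  proof -
    fix t :: nat
    show "int t \<le> 2*m \<Longrightarrow> q 0 (int t) (2*m - int t) = (-1)^t * binz (2*m) (int t) * lam"
    proof (induction t)
      case 0
      then show ?case unfolding lam_def binz_def by simp
    next
      case (Suc t)
      have IH: "q 0 (int t) (2*m - int t) = (-1)^t * binz (2*m) (int t) * lam"
        using Suc by simp
      have Y1: "of_int (int t+1) * q 0 (int t+1) (2*m - int t - 1) + of_int (2*m - int t) * q 0 (int t) (2*m - int t) = 0"
        using Yrel[of "int t" "2*m - int t - 1"] by simp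
      have B: "of_int (int t+1) * binz (2*m) (int t+1) = of_int (2*m - int t) * binz (2*m) (int t)"
        using binz_step[of "2*m" "int t"] assms by simp
      have "of_int (int t+1) * q 0 (int t+1) (2*m - int t - 1)
          = of_int (int t+1) * ((-1)^Suc t * binz (2*m) (int t+1) * lam)"
      proof -
        have "of_int (int t+1) * q 0 (int t+1) (2*m - int t - 1) = - (of_int (2*m - int t) * q 0 (int t) (2*m - int t))"
          using Y1 by (simp add: eq_neg_iff_add_eq_0)
        also have "\<dots> = - ((-1)^t * lam * (of_int (2*m - int t) * binz (2*m) (int t)))"
          using IH by (simp add: algebra_simps)
        also have "\<dots> = - ((-1)^t * lam * (of_int (int t+1) * binz (2*m) (int t+1)))"
          using B by simp
        also have "\<dots> = of_int (int t+1) * ((-1)^Suc t * binz (2*m) (int t+1) * lam)"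
          by (simp add: algebra_simps)
        finally show ?thesis .
      qed
      moreover have "(of_int (int t+1) :: complex) \<noteq> 0"
        proof -
          have e: "(of_int (int t+1) :: complex) = of_nat (Suc t)" by simp
          show ?thesis unfolding e by (rule of_nat_neq_0)
        qed
      ultimately have "q 0 (int t+1) (2*m - int t - 1) = (-1)^Suc t * binz (2*m) (int t+1) * lam"
        using mult_left_cancel by blast
      then show ?case by (simp add: algebra_simps)
    qed
  qed
  have Gbase: "\<And>i. G m r i (2*m - i) = (if 0 \<le> i \<and> i \<le> 2*m then (-1)^nat i * binz (2*m) i else 0)"
  proof -
    fix i
    have z: "\<And>s. s \<in> {0..2*m} \<Longrightarrow> s \<noteq> i \<Longrightarrow>
       (-1) ^ nat s * binz (2 * m) s * binz (r - s) (r - i) * binz (r - 2 * m + s) (r - (2*m - i)) = 0"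
      by (auto simp: binz_def)
    show "G m r i (2*m - i) = (if 0 \<le> i \<and> i \<le> 2*m then (-1)^nat i * binz (2*m) i else 0)"
    proof (cases "0 \<le> i \<and> i \<le> 2*m")
      case True
      have "G m r i (2*m - i) = (-1) ^ nat i * binz (2 * m) i * binz (r - i) (r - i) * binz (r - 2 * m + i) (r - (2*m - i))"
      proof -
        have rem: "(\<Sum>s\<in>{0..2*m}-{i}. (-1) ^ nat s * binz (2 * m) s * binz (r - s) (r - i) * binz (r - 2 * m + s) (r - (2*m - i))) = 0"
          by (rule sum.neutral) (use z in blast)
        have iin: "i \<in> {0..2*m}" using True by simp
        show ?thesis unfolding G_def sum.remove[OF finite_atLeastAtMost_int iin] rem by simp
      qed
      also have "\<dots> = (-1) ^ nat i * binz (2 * m) i"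
      proof -
        have eq: "r - (2*m - i) = r - 2*m + i" by simp
        show ?thesis unfolding eq using True assms by (simp add: binz_def)
      qed
      finally show ?thesis using True by simp
    next
      case False
      have "G m r i (2*m - i) = 0" unfolding G_def
      proof (rule sum.neutral, intro ballI)
        fix s assume s: "s \<in> {0..2*m}"
        hence "s \<noteq> i" using False by auto
        thus "(-1) ^ nat s * binz (2 * m) s * binz (r - s) (r - i) * binz (r - 2 * m + s) (r - (2*m - i)) = 0"
          using z s by blast
      qed
      then show ?thesis unfolding if_not_P[OF False] .
    qed
  qed
  have base: "\<And>i j. i + j = 2*m \<Longrightarrow> q 0 i j = lam * G m r i j"
  proof -
    fix i j assume ij: "i + j = 2*m"
    hence j: "j = 2*m - i" by simp
    show "q 0 i j = lam * G m r i j"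
    proof (cases "0 \<le> i \<and> i \<le> 2*m")
      case True
      then obtain t where t: "i = int t" by (metis nonneg_int_cases)
      show ?thesis using base_t[of t] True unfolding j Gbase t by simp
    next
      case False
      then show ?thesis unfolding j Gbase using qout assms by auto
    qed
  qed
  have main: "\<And>k::nat. int k \<le> n \<Longrightarrow> (\<forall>i j. i + j = 2*m + int k \<longrightarrow> binz n (int k) * q (int k) i j = lam * G m r i j)"
  proof -
    fix k :: nat
    show "int k \<le> n \<Longrightarrow> (\<forall>i j. i + j = 2*m + int k \<longrightarrow> binz n (int k) * q (int k) i j = lam * G m r i j)"
    proof (induction k)
      case 0
      have "binz n 0 = 1" using n0 by (simp add: binz_def)
      then show ?case using base by simp
    next
      case (Suc k)
      have IH: "\<And>i j. i + j = 2*m + int k \<Longrightarrow> binz n (int k) * q (int k) i j = lam * G m r i j"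
        using Suc by simp
      show ?case
      proof (intro allI impI)
        fix i j assume ij: "i + j = 2*m + int (Suc k)"
        have X1: "of_int (r-i+1) * q (int k) (i-1) j + of_int (r-j+1) * q (int k) i (j-1) = of_int (n - int k) * q (int k+1) i j"
          using Xrel[of "int k" i j] Suc by simp
        have B: "of_int (int k+1) * binz n (int k+1) = of_int (n - int k) * binz n (int k)"
          using binz_step[of n "int k"] n0 by simp
        have i1: "binz n (int k) * q (int k) (i-1) j = lam * G m r (i-1) j" using IH ij by simp
        have i2: "binz n (int k) * q (int k) i (j-1) = lam * G m r i (j-1)" using IH ij by simp
        have "of_int (int k+1) * (binz n (int k+1) * q (int k+1) i j)
            = binz n (int k) * (of_int (n - int k) * q (int k+1) i j)"
        proof -
          have "of_int (int k+1) * (binz n (int k+1) * q (int k+1) i j)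
              = (of_int (int k+1) * binz n (int k+1)) * q (int k+1) i j" by (simp only: mult.assoc)
          also have "\<dots> = (of_int (n - int k) * binz n (int k)) * q (int k+1) i j" by (simp only: B)
          also have "\<dots> = binz n (int k) * (of_int (n - int k) * q (int k+1) i j)" by (simp only: mult_ac)
          finally show ?thesis .
        qed
        also have "\<dots> = binz n (int k) * (of_int (r-i+1) * q (int k) (i-1) j + of_int (r-j+1) * q (int k) i (j-1))"
          using X1 by simp
        also have "\<dots> = lam * (of_int (r-i+1) * G m r (i-1) j + of_int (r-j+1) * G m r i (j-1))"
          using i1 i2 by (simp add: algebra_simps)
        also have "\<dots> = lam * (of_int (i+j-2*m) * G m r i j)"
          using G_rec[of m r i j] assms by simp
        also have "\<dots> = of_int (int k+1) * (lam * G m r i j)"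
          using ij by (simp add: algebra_simps)
        finally have "of_int (int k+1) * (binz n (int k+1) * q (int k+1) i j) = of_int (int k+1) * (lam * G m r i j)" .
        moreover have "(of_int (int k+1) :: complex) \<noteq> 0"
        proof -
          have e: "(of_int (int k+1) :: complex) = of_nat (Suc k)" by simp
          show ?thesis unfolding e by (rule of_nat_neq_0)
        qed
        ultimately have "binz n (int k+1) * q (int k+1) i j = lam * G m r i j"
          using mult_left_cancel by blast
        then show "binz n (int (Suc k)) * q (int (Suc k)) i j = lam * G m r i j" by (simp add: add.commute)
      qed
    qed
  qed
  show ?thesis
  proof (intro allI impI)
    fix k i assume H: "0 \<le> k \<and> 2 * k \<le> n \<and> 0 \<le> i \<and> i \<le> r"
    define j where "j = 2*m + k - i"
    obtain kk where kk: "k = int kk" using H by (metis nonneg_int_cases)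
    have M: "binz n k * q k i j = lam * G m r i j"
      using main[of kk] H kk j_def by simp
    have GS: "G m r i j = (\<Sum>s = max 0 (i - k) .. min (2 * m) i.
              (-1) ^ nat s * binz (2 * m) s * binz (r - s) (r - i) * binz (r - 2 * m + s) (r - j))"
      unfolding G_def
    proof (rule sum.mono_neutral_right)
      show "finite {0..2*m}" by simp
      show "{max 0 (i - k)..min (2 * m) i} \<subseteq> {0..2*m}" using H by auto
      show "\<forall>s\<in>{0..2 * m} - {max 0 (i - k)..min (2 * m) i}.
           (-1) ^ nat s * binz (2 * m) s * binz (r - s) (r - i) * binz (r - 2 * m + s) (r - j) = 0"
      proof
        fix s assume s: "s \<in> {0..2 * m} - {max 0 (i - k)..min (2 * m) i}"
        hence "i < s \<or> s < i - k" using H by auto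
        then show "(-1) ^ nat s * binz (2 * m) s * binz (r - s) (r - i) * binz (r - 2 * m + s) (r - j) = 0"
        proof
          assume "i < s"
          hence "binz (r - s) (r - i) = 0" unfolding binz_def by simp
          thus ?thesis by simp
        next
          assume "s < i - k"
          hence "binz (r - 2 * m + s) (r - j) = 0" unfolding binz_def j_def by simp
          thus ?thesis by simp
        qed
      qed
    qed
    show "let j = 2 * m + k - i; lam = qk r f 0 0 (2 * m) in
      binz n k * qk r f k i j =
      lam * (\<Sum>s = max 0 (i - k) .. min (2 * m) i.
              (-1) ^ nat s * binz (2 * m) s * binz (r - s) (r - i) * binz (r - 2 * m + s) (r - j))"
      unfolding Let_def q_def[symmetric] lam_def[symmetric] j_def[symmetric] GS[symmetric] by (rule M)
  qed
qed

end
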